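(* Let $\mathcal{A}$ be a finite nonempty set of strata with $|\mathcal{A}| = r$. For each $j \in \mathcal{A}$ let $a_j = n_j\sigma_j > 0$ and let $s_j > 0$ be the current sample size of stratum $j$. Let $M$ be a real number with $0 < M \le \sum_{j\in\mathcal{A}} s_j$. Run the procedure $\mathrm{SSR}(\mathcal{A}, M, \mathcal{L})$ defined in the context. Then the procedure terminates, and the resulting values $(\mathcal{L}[j])_{j\in\mathcal{A}}$ form an optimal solution of the problem $$\text{minimize } \sum_{j\in\mathcal{A}} \frac{n_j^2\sigma_j^2}{x_j} \quad\text{subject to } 0 \le x_j \le s_j \ (j\in\mathcal{A}),\quad \sum_{j\in\mathcal{A}} x_j = M,$$ over real vectors $(x_j)_{j\in\mathcal{A}}$; i.e. $\mathcal{L}$ is a variance-optimal reduction of the stratified random sample to total size $M$. Moreover, the worst-case running time of $\mathrm{SSR}$ is $O(r^2)$.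
   Context: Setting: a data set of $n$ real values is partitioned into strata; stratum $j$ contains $n_j$ values with (population) standard deviation $\sigma_j$. A stratified random sample holds $s_j$ values drawn uniformly without replacement from stratum $j$. The variance of the estimator $\bar y=\frac1n\sum_j n_j\bar y_j$ of the population mean (where $\bar y_j$ is the mean of the sample of stratum $j$) is $V = \frac{1}{n^2}\sum_j \frac{n_j^2\sigma_j^2}{s_j} - \frac{1}{n^2}\sum_j n_j\sigma_j^2$; since the second term does not depend on the sample sizes, reducing the total sample size to $M$ with minimum increase of $V$ ("variance-optimal sample size reduction") is the optimization problem in the claim. Procedure $\mathrm{SSR}(\mathcal{A}, M, \mathcal{L})$ (writes into an array $\mathcal{L}$ indexed by strata): 1. Set $\mathcal{O} \gets \emptyset$. 2. For each $j\in\mathcal{A}$: set $M_j \gets M\cdot n_j\sigma_j / \sum_{t\in\mathcal{A}} n_t\sigma_t$ (the Neyman allocation of budget $M$ among $\mathcal{A}$); if $s_j > M_j$ then add $j$ to $\mathcal{O}$ (stratum $j$ is "oversized"), else set $\mathcal{L}[j] \gets s_j$. 3. If $\mathcal{O} = \mathcal{A}$, set $\mathcal{L}[j] \gets M_j$ for all $j\in\mathcal{A}$ and stop. 4. Otherwise call $\mathrm{SSR}(\mathcal{O},\, M - \sum_{j\in\mathcal{A}\setminus\mathcal{O}} s_j,\, \mathcal{L})$. *)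

theory Defs
  imports Complex_Main "HOL-Library.Extended_Real"
begin

text \<open>The weight a j stands for n_j sigma_j, s j is the
current sample size of stratum j, L is the output array. The procedure returns the
final array together with the number of elementary steps performed: each call
costs card A + 1 steps (computing the Neyman allocation for all strata of A and
testing each of them, plus constant overhead). Termination of the procedure
is expressed by the domain predicate SSR_dom.\<close>

function SSR :: "('a \<Rightarrow> real) \<Rightarrow> ('a \<Rightarrow> nat) \<Rightarrow> 'a set \<Rightarrow> real \<Rightarrow> ('a \<Rightarrow> real)
                 \<Rightarrow> ('a \<Rightarrow> real) \<times> nat" where
  "SSR a s A M L =
     (let T = (\<Sum>t\<in>A. a t);
          Mj = (\<lambda>j. M * a j / T);
          Ov = {j\<in>A. real (s j) > Mj j};
          L' = (\<lambda>j. if j \<in> A - Ov then real (s j) else L j)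
      in if Ov = A
         then ((\<lambda>j. if j \<in> A then Mj j else L' j), card A + 1)
         else (fst (SSR a s Ov (M - (\<Sum>j\<in>A - Ov. real (s j))) L'),
               snd (SSR a s Ov (M - (\<Sum>j\<in>A - Ov. real (s j))) L') + card A + 1))"
  by pat_completeness auto

definition ssr_feasible :: "('a \<Rightarrow> nat) \<Rightarrow> 'a set \<Rightarrow> real \<Rightarrow> ('a \<Rightarrow> real) \<Rightarrow> bool" where
  "ssr_feasible s A M x \<longleftrightarrow>
     (\<forall>j\<in>A. 0 \<le> x j \<and> x j \<le> real (s j)) \<and> (\<Sum>j\<in>A. x j) = M"

text \<open>Objective sum of (n_j sigma_j)^2 / x_j, with value +infinity when some x_j = 0
(since a_j > 0).\<close>
definition ssr_obj :: "('a \<Rightarrow> real) \<Rightarrow> 'a set \<Rightarrow> ('a \<Rightarrow> real) \<Rightarrow> ereal" where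
  "ssr_obj a A x = (\<Sum>j\<in>A. if x j = 0 then \<infinity> else ereal ((a j)^2 / x j))"

definition ssr_optimal :: "('a \<Rightarrow> real) \<Rightarrow> ('a \<Rightarrow> nat) \<Rightarrow> 'a set \<Rightarrow> real \<Rightarrow> ('a \<Rightarrow> real) \<Rightarrow> bool" where
  "ssr_optimal a s A M x \<longleftrightarrow>
     ssr_feasible s A M x \<and> (\<forall>y. ssr_feasible s A M y \<longrightarrow> ssr_obj a A x \<le> ssr_obj a A y)"

end

theory Submission
  imports Defs
begin

lemma dom_step:
  assumes "\<And>Ov. Ov = {j\<in>A. M * a j / sum a A < real (s j)} \<Longrightarrow> Ov \<noteq> A \<Longrightarrow>
     SSR_dom (a, s, Ov, M - (\<Sum>j\<in>A - Ov. real (s j)), (\<lambda>j. if j \<in> A - Ov then real (s j) else L j))"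
  shows "SSR_dom (a, s, A, M, L)"
  apply (rule accp.accI)
  apply (erule SSR_rel.cases)
  using assms by auto

lemma SSR_dom_fin: "finite A \<Longrightarrow> SSR_dom (a, s, A, M, L)"
proof (induction "card A" arbitrary: A M L rule: less_induct)
  case less
  show ?case
  proof (rule dom_step)
    fix Ov assume "Ov = {j\<in>A. M * a j / sum a A < real (s j)}" "Ov \<noteq> A"
    then have "Ov \<subset> A" by auto
    then have "card Ov < card A" "finite Ov" using less.prems by (auto intro: psubset_card_mono finite_subset)
    then show "SSR_dom (a, s, Ov, M - (\<Sum>j\<in>A - Ov. real (s j)), (\<lambda>j. if j \<in> A - Ov then real (s j) else L j))"
      using less.hyps by blast
  qed
qed

lemma SSR_empty: "SSR a s {} M L = (L, 1)"
  using SSR.psimps[OF SSR_dom_fin[of "{}" a s M L]] by (simp add: Let_def)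

definition kkt where
  "kkt a s A x lam \<longleftrightarrow> (\<forall>j\<in>A. (x j = lam * a j \<and> x j \<le> real (s j)) \<or> (x j = real (s j) \<and> real (s j) \<le> lam * a j))"

lemma main_inv:
  assumes "finite A" "A \<noteq> {}" "\<forall>j\<in>A. a j > 0 \<and> s j > 0" "0 < M" "M \<le> (\<Sum>j\<in>A. real (s j))"
  shows "(\<exists>lam \<ge> M / sum a A. kkt a s A (fst (SSR a s A M L)) lam) \<and>
         (\<Sum>j\<in>A. fst (SSR a s A M L) j) = M \<and>
         (\<forall>j. j \<notin> A \<longrightarrow> fst (SSR a s A M L) j = L j) \<and>
         snd (SSR a s A M L) \<le> (card A + 1)^2"
  using assms
proof (induction "card A" arbitrary: A M L rule: less_induct)
  case less
  define T where "T = sum a A"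
  define Mj where "Mj = (\<lambda>j. M * a j / T)"
  define Ov where "Ov = {j\<in>A. Mj j < real (s j)}"
  define L' where "L' = (\<lambda>j. if j \<in> A - Ov then real (s j) else L j)"
  define M' where "M' = M - (\<Sum>j\<in>A - Ov. real (s j))"
  have fin: "finite A" and pos: "\<forall>j\<in>A. a j > 0 \<and> s j > 0" using less.prems by auto
  have Tpos: "T > 0" unfolding T_def using less.prems by (auto intro: sum_pos)
  have sumMj: "(\<Sum>j\<in>A. Mj j) = M" unfolding Mj_def using Tpos
    by (simp add: sum_divide_distrib[symmetric] sum_distrib_left[symmetric] T_def)
  have eq: "SSR a s A M L = (if Ov = A then ((\<lambda>j. if j \<in> A then Mj j else L' j), card A + 1)
         else (fst (SSR a s Ov M' L'), snd (SSR a s Ov M' L') + card A + 1))"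
    using SSR.psimps[OF SSR_dom_fin[OF fin, of a s M L]]
    unfolding Let_def T_def Mj_def Ov_def L'_def M'_def
    by simp
  have Mjlam: "Mj j = (M / T) * a j" for j unfolding Mj_def by simp
  have nonOv: "j \<in> A - Ov \<Longrightarrow> real (s j) \<le> Mj j" for j unfolding Ov_def by auto
  show ?case
  proof (cases "Ov = A")
    case True
    note eq = eq[unfolded if_P[OF True]]
    have "kkt a s A (fst (SSR a s A M L)) (M / T)"
      unfolding kkt_def eq using True Ov_def Mjlam by (auto simp: less_imp_le) (metis (mono_tags, lifting) less_imp_le mem_Collect_eq)
    moreover have "\<forall>j. j \<notin> A \<longrightarrow> fst (SSR a s A M L) j = L j" using True eq by (simp add: L'_def)
    ultimately show ?thesis using True eq sumMj T_def
        by (auto simp: power2_eq_square)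
  next
    case False
    have sub: "Ov \<subset> A" using False Ov_def by auto
    have finOv: "finite Ov" using sub fin finite_subset by auto
    have cardlt: "card Ov < card A" using sub fin psubset_card_mono by auto
    have splitS: "(\<Sum>j\<in>A. f j) = (\<Sum>j\<in>Ov. f j) + (\<Sum>j\<in>A - Ov. f j)" for f :: "'a \<Rightarrow> real"
      using sum.subset_diff[OF _ fin, of Ov f] sub by auto
    note eq = eq[unfolded if_not_P[OF False]]
    have fstA: "fst (SSR a s A M L) = fst (SSR a s Ov M' L')" using eq by simp
    have sndA: "snd (SSR a s A M L) = snd (SSR a s Ov M' L') + card A + 1" using eq by simp
    show ?thesis
    proof (cases "Ov = {}")
      case True
      have "(\<Sum>j\<in>A. real (s j)) \<le> (\<Sum>j\<in>A. Mj j)"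
        by (rule sum_mono) (use nonOv True in auto)
      hence "(\<Sum>j\<in>A. real (s j)) = M" using sumMj less.prems by linarith
      have R: "SSR a s Ov M' L' = (L', 1)" using True SSR_empty by simp
      have k: "kkt a s A (fst (SSR a s A M L)) (M / T)"
        unfolding kkt_def fstA R using True nonOv Mjlam L'_def by auto
      have "card A \<ge> 1" using fin less.prems(2) by (simp add: Suc_le_eq card_gt_0_iff)
      hence "card A + 1 + 1 \<le> (card A + 1)^2" by (simp add: power2_eq_square)
      moreover have "snd (SSR a s A M L) = card A + 1 + 1" using sndA R by simp
      moreover have "(\<Sum>j\<in>A. fst (SSR a s A M L) j) = M"
        using fstA R \<open>(\<Sum>j\<in>A. real (s j)) = M\<close> True by (simp add: L'_def)
      moreover have "\<forall>j. j \<notin> A \<longrightarrow> fst (SSR a s A M L) j = L j"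
        using fstA R by (simp add: L'_def)
      ultimately show ?thesis using k T_def by auto
    next
      case ne: False
      have a1: "(\<Sum>j\<in>A - Ov. real (s j)) \<le> (\<Sum>j\<in>A - Ov. Mj j)"
        by (rule sum_mono) (use nonOv in auto)
      have a2: "(\<Sum>j\<in>Ov. Mj j) > 0"
        using ne finOv pos Tpos less.prems(4) sub unfolding Mj_def
        by (intro sum_pos) auto
      have M'ge: "M' \<ge> (\<Sum>j\<in>Ov. Mj j)" using a1 splitS[of Mj] sumMj M'_def by linarith
      have M'pos: "M' > 0" using M'ge a2 by linarith
      have M'le: "M' \<le> (\<Sum>j\<in>Ov. real (s j))" using splitS[of "\<lambda>j. real (s j)"] less.prems(5) M'_def by linarith
      have posOv: "\<forall>j\<in>Ov. a j > 0 \<and> s j > 0" using pos sub by auto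
      note IH = less.hyps[OF cardlt finOv ne posOv M'pos M'le, of L']
      obtain lam where lam: "lam \<ge> M' / sum a Ov" "kkt a s Ov (fst (SSR a s Ov M' L')) lam"
        using IH by blast
      have T'pos: "sum a Ov > 0" using ne finOv posOv by (intro sum_pos) auto
      have "(\<Sum>j\<in>Ov. Mj j) = M / T * sum a Ov" using Mjlam by (simp add: sum_distrib_left)
      hence "M / T * sum a Ov \<le> M'" using M'ge by simp
      hence "M / T \<le> M' / sum a Ov" using T'pos by (simp add: pos_le_divide_eq)
      hence lamge: "M / T \<le> lam" using lam(1) by linarith
      have out: "\<forall>j. j \<notin> Ov \<longrightarrow> fst (SSR a s Ov M' L') j = L' j" using IH by blast
      have k: "kkt a s A (fst (SSR a s A M L)) lam"
        unfolding kkt_def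
      proof
        fix j assume j: "j \<in> A"
        show "(fst (SSR a s A M L) j = lam * a j \<and> fst (SSR a s A M L) j \<le> real (s j)) \<or>
              (fst (SSR a s A M L) j = real (s j) \<and> real (s j) \<le> lam * a j)"
        proof (cases "j \<in> Ov")
          case True
          then show ?thesis using lam(2) fstA unfolding kkt_def by auto
        next
          case False
          have "real (s j) \<le> M / T * a j" using nonOv[of j] j False Mjlam by auto
          also have "\<dots> \<le> lam * a j" using lamge pos j mult_right_mono[OF lamge, of "a j"] by force
          finally show ?thesis using out False fstA L'_def j by auto
        qed
      qed
      have s1: "(\<Sum>j\<in>Ov. fst (SSR a s Ov M' L') j) = M'" using IH by blast
      have s2: "(\<Sum>j\<in>A - Ov. fst (SSR a s Ov M' L') j) = (\<Sum>j\<in>A - Ov. real (s j))"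
        using out L'_def by (intro sum.cong) auto
      have sumA: "(\<Sum>j\<in>A. fst (SSR a s A M L) j) = M"
        using splitS[of "fst (SSR a s Ov M' L')"] s1 s2 fstA M'_def by simp
      have outA: "\<forall>j. j \<notin> A \<longrightarrow> fst (SSR a s A M L) j = L j" using out fstA L'_def sub by auto
      have c1: "snd (SSR a s Ov M' L') \<le> (card Ov + 1)^2" using IH by blast
      have "(card Ov + 1)^2 \<le> (card A)^2" using cardlt by (simp add: power_mono)
      hence "snd (SSR a s A M L) \<le> (card A)^2 + card A + 1" using sndA c1 by linarith
      also have "\<dots> \<le> (card A + 1)^2" by (simp add: power2_eq_square)
      finally show ?thesis using k lamge sumA outA T_def by auto
    qed
  qed
qed

lemma tangent:
  fixes a x y :: real assumes "x > 0" "y > 0"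
  shows "a^2/x - a^2/x^2 * (y - x) \<le> a^2/y"
proof -
  have "a^2/y - (a^2/x - a^2/x^2 * (y - x)) = a^2 * (y-x)^2 / (x^2 * y)"
    using assms by (simp add: field_simps power2_eq_square)
  also have "\<dots> \<ge> 0" using assms by simp
  finally show ?thesis by simp
qed

lemma term_ineq:
  fixes a x y lam s :: real
  assumes "a > 0" "lam > 0" "x > 0" "y > 0" "y \<le> s"
    "(x = lam * a \<and> x \<le> s) \<or> (x = s \<and> s \<le> lam * a)"
  shows "a^2/x - (y - x)/lam^2 \<le> a^2/y"
proof -
  have "a^2/x^2 * (y - x) \<le> (y - x)/lam^2"
  proof (cases "x = lam * a")
    case True
    then have "a^2/x^2 = 1/lam^2" using assms by (simp add: power_mult_distrib)
    then show ?thesis by simp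
  next
    case False
    then have xs: "x = s" "s \<le> lam * a" using assms(6) by auto
    have "x^2 \<le> (lam*a)^2" using xs assms by (intro power_mono) auto
    then have "1/lam^2 \<le> a^2/x^2" using assms by (simp add: field_simps power_mult_distrib)
    moreover have "y - x \<le> 0" using xs assms by simp
    ultimately show ?thesis using mult_right_mono_neg by (metis divide_inverse mult_1 mult.commute)
  qed
  then show ?thesis using tangent[OF assms(3,4), of a] by linarith
qed

lemma kkt_opt:
  assumes fin: "finite A" and pos: "\<forall>j\<in>A. a j > 0 \<and> s j > 0" and lam: "lam > 0"
    and k: "kkt a s A x lam" and sx: "(\<Sum>j\<in>A. x j) = M"
  shows "ssr_optimal a s A M x"
proof -
  have xpos: "x j > 0" if "j \<in> A" for j
    using k pos lam that unfolding kkt_def by (metis mult_pos_pos of_nat_0_less_iff)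
  have xle: "x j \<le> real (s j)" if "j \<in> A" for j
    using k that unfolding kkt_def by auto
  have feas: "ssr_feasible s A M x" unfolding ssr_feasible_def
    using xpos xle sx by (auto simp: less_imp_le)
  have objx: "ssr_obj a A x = ereal (\<Sum>j\<in>A. (a j)^2 / x j)"
    unfolding ssr_obj_def sum_ereal[symmetric] by (intro sum.cong refl) (use xpos in force)
  show ?thesis unfolding ssr_optimal_def
  proof (intro conjI allI impI feas)
    fix y assume fy: "ssr_feasible s A M y"
    show "ssr_obj a A x \<le> ssr_obj a A y"
    proof (cases "\<forall>j\<in>A. y j > 0")
      case True
      have objy: "ssr_obj a A y = ereal (\<Sum>j\<in>A. (a j)^2 / y j)"
        unfolding ssr_obj_def sum_ereal[symmetric] by (intro sum.cong refl) (use True in force)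
      have sy: "(\<Sum>j\<in>A. y j) = M" using fy unfolding ssr_feasible_def by auto
      have "(\<Sum>j\<in>A. (a j)^2 / x j - (y j - x j)/lam^2) \<le> (\<Sum>j\<in>A. (a j)^2 / y j)"
      proof (rule sum_mono)
        fix j assume j: "j \<in> A"
        show "(a j)^2 / x j - (y j - x j)/lam^2 \<le> (a j)^2 / y j"
          apply (rule term_ineq[where s = "real (s j)"])
          using pos j lam xpos True fy k unfolding ssr_feasible_def kkt_def by auto
      qed
      moreover have "(\<Sum>j\<in>A. (a j)^2 / x j - (y j - x j)/lam^2) = (\<Sum>j\<in>A. (a j)^2 / x j)"
        using sx sy by (simp add: sum_subtractf sum_divide_distrib[symmetric])
      ultimately show ?thesis using objx objy by simp
    next
      case False
      then obtain j where j: "j \<in> A" "y j = 0" using fy unfolding ssr_feasible_def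
        by (metis less_eq_real_def)
      define f where "f = (\<lambda>j. if y j = 0 then \<infinity> else ereal ((a j)^2 / y j))"
      have fnn: "f i \<ge> 0" if "i \<in> A" for i
        using fy that unfolding f_def ssr_feasible_def by auto
      have "ssr_obj a A y = f j + (\<Sum>i\<in>A - {j}. f i)"
        unfolding ssr_obj_def f_def[symmetric] using sum.remove[OF fin j(1)] by simp
      also have "\<dots> = \<infinity>" using j f_def sum_nonneg[of "A - {j}" f] fnn by auto
      finally show ?thesis by simp
    qed
  qed
qed

theorem theorem1:
  shows "(\<forall>(A::'a set) a s (M::real) L.
            finite A \<and> A \<noteq> {} \<and> (\<forall>j\<in>A. a j > 0 \<and> s j > 0) \<and>
            0 < M \<and> M \<le> (\<Sum>j\<in>A. real (s j)) \<longrightarrow>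
              SSR_dom (a, s, A, M, L) \<and> ssr_optimal a s A M (fst (SSR a s A M L)))
       \<and> (\<exists>C::real. \<forall>(A::'a set) a s (M::real) L.
            finite A \<and> A \<noteq> {} \<and> (\<forall>j\<in>A. a j > 0 \<and> s j > 0) \<and>
            0 < M \<and> M \<le> (\<Sum>j\<in>A. real (s j)) \<longrightarrow>
              real (snd (SSR a s A M L)) \<le> C * real (card A) ^ 2)"
proof (intro conjI allI impI exI[of _ 4])
  fix A :: "'a set" and a :: "'a \<Rightarrow> real" and s :: "'a \<Rightarrow> nat" and M :: real and L :: "'a \<Rightarrow> real"
  assume h: "finite A \<and> A \<noteq> {} \<and> (\<forall>j\<in>A. a j > 0 \<and> s j > 0) \<and>
            0 < M \<and> M \<le> (\<Sum>j\<in>A. real (s j))"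
  show "SSR_dom (a, s, A, M, L)" using h SSR_dom_fin by blast
  from h have inv: "(\<exists>lam \<ge> M / sum a A. kkt a s A (fst (SSR a s A M L)) lam) \<and>
         (\<Sum>j\<in>A. fst (SSR a s A M L) j) = M"
    using main_inv[of A a s M L] by blast
  then obtain lam where lam: "lam \<ge> M / sum a A" "kkt a s A (fst (SSR a s A M L)) lam" by blast
  have "sum a A > 0" using h by (intro sum_pos) auto
  hence "M / sum a A > 0" using h by simp
  hence "lam > 0" using lam by linarith
  then show "ssr_optimal a s A M (fst (SSR a s A M L))"
    using kkt_opt[of A a s lam "fst (SSR a s A M L)" M] h lam inv by blast
next
  fix A :: "'a set" and a :: "'a \<Rightarrow> real" and s :: "'a \<Rightarrow> nat" and M :: real and L :: "'a \<Rightarrow> real"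
  assume h: "finite A \<and> A \<noteq> {} \<and> (\<forall>j\<in>A. a j > 0 \<and> s j > 0) \<and>
            0 < M \<and> M \<le> (\<Sum>j\<in>A. real (s j))"
  have b: "snd (SSR a s A M L) \<le> (card A + 1)^2" using h main_inv[of A a s M L] by blast
  have c: "card A \<ge> 1" using h by (simp add: Suc_le_eq card_gt_0_iff)
  have "real (snd (SSR a s A M L)) \<le> (real (card A) + 1)^2"
    using b by (metis of_nat_1 of_nat_add of_nat_le_iff of_nat_power)
  also have "\<dots> \<le> (2 * real (card A))^2" using c by (intro power_mono) auto
  also have "\<dots> = 4 * real (card A) ^ 2" by (simp add: power_mult_distrib)
  finally show "real (snd (SSR a s A M L)) \<le> 4 * real (card A) ^ 2" .
qed

end
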